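(* Let $n$ be a positive integer, $\lambda$ an infinite cardinal, and $\tau$ a shift-continuous feebly compact $T_1$-topology on the semilattice $\exp_n\lambda$. Then for any point $x\in\exp_n\lambda$ and any open neighbourhood $U(x)$ of $x$ in $(\exp_n\lambda,\tau)$ there exist finitely many $x_1,\ldots,x_m\in{\uparrow}x\setminus\{x\}$ such that $${\uparrow}x\setminus\operatorname{cl}_{\exp_n\lambda}(U(x))\subseteq{\uparrow}x_1\cup\cdots\cup{\uparrow}x_m.$$
   Context: For a positive integer $n$ and a cardinal $\lambda$, $\exp_n\lambda=\{A\subseteq\lambda\colon |A|\leqslant n\}$, regarded as a semilattice under $\cap$; its natural order is inclusion. For $e$ in a semilattice, ${\uparrow}e=\{f\colon e\leqslant f\}$. A topology on a semilattice is shift-continuous if the semilattice operation is separately continuous. A topological space is feebly compact if every locally finite open cover of it is finite. *)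

theory Defs
  imports "HOL-Analysis.Analysis"
begin

text \<open>The semilattice exp_n(L): subsets of L of cardinality at most n, with operation intersection.\<close>
definition expn :: "nat \<Rightarrow> 'a set \<Rightarrow> 'a set set" where
  "expn n L = {A. A \<subseteq> L \<and> finite A \<and> card A \<le> n}"

definition upset :: "'a set set \<Rightarrow> 'a set \<Rightarrow> 'a set set" where
  "upset S e = {f \<in> S. e \<subseteq> f}"

definition shift_continuous :: "'a set topology \<Rightarrow> bool" where
  "shift_continuous T \<longleftrightarrow>
     (\<forall>a\<in>topspace T. continuous_map T T (\<lambda>x. x \<inter> a) \<and> continuous_map T T (\<lambda>x. a \<inter> x))"

definition locally_finite_family :: "'b topology \<Rightarrow> 'b set set \<Rightarrow> bool" where
  "locally_finite_family T \<U> \<longleftrightarrow>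
     (\<forall>x\<in>topspace T. \<exists>V. openin T V \<and> x \<in> V \<and> finite {U \<in> \<U>. U \<inter> V \<noteq> {}})"

definition feebly_compact :: "'b topology \<Rightarrow> bool" where
  "feebly_compact T \<longleftrightarrow>
     (\<forall>\<U>. (\<forall>U\<in>\<U>. openin T U) \<and> \<Union>\<U> = topspace T \<and> locally_finite_family T \<U>
          \<longrightarrow> finite \<U>)"

end

theory Submission imports Defs begin

lemma upset_closed:
  assumes "t1_space T" "shift_continuous T" "topspace T = S" "e \<in> S"
  shows "closedin T (upset S e)"
proof -
  have c: "continuous_map T T (\<lambda>f. f \<inter> e)" using assms unfolding shift_continuous_def by auto
  have "upset S e = {f \<in> topspace T. f \<inter> e \<in> {e}}" using assms unfolding upset_def by auto
  moreover have "closedin T {e}" using assms closedin_t1_singleton by metis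
  ultimately show ?thesis using closedin_continuous_map_preimage[OF c, of "{e}"] by simp
qed

lemma upset_open:
  assumes "t1_space T" "shift_continuous T" "topspace T = S" "e \<in> S" "finite e"
  shows "openin T (upset S e)"
proof -
  have c: "continuous_map T T (\<lambda>f. f \<inter> e)" using assms unfolding shift_continuous_def by auto
  have eq: "topspace T - upset S e = (\<Union>y\<in>Pow e - {e}. {f \<in> topspace T. f \<inter> e \<in> {y} \<inter> topspace T})"
    using assms c unfolding upset_def continuous_map_def by auto
  have "closedin T ({y} \<inter> topspace T)" for y
    by (cases "y \<in> topspace T") (auto simp: closedin_t1_singleton assms(1))
  hence "closedin T (topspace T - upset S e)" unfolding eq
    by (intro closedin_Union) (use assms(5) closedin_continuous_map_preimage[OF c] in blast)+
  hence "openin T (topspace T - (topspace T - upset S e))" by blast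
  moreover have "upset S e \<subseteq> topspace T" using assms unfolding upset_def by auto
  ultimately show ?thesis by (simp add: Diff_Diff_Int inf.absorb2)
qed

theorem proposition9:
  fixes n :: nat and L :: "'a set" and T :: "'a set topology"
  assumes "n \<ge> 1"
    and "infinite L"
    and "topspace T = expn n L"
    and "shift_continuous T"
    and "feebly_compact T"
    and "t1_space T"
    and "x \<in> expn n L"
    and "openin T U" and "x \<in> U"
  shows "\<exists>F. finite F \<and> F \<subseteq> upset (expn n L) x - {x} \<and>
           upset (expn n L) x - T closure_of U \<subseteq> (\<Union>y\<in>F. upset (expn n L) y)"
proof -
  define S where "S = expn n L"
  have hS: "topspace T = S" using assms(3) S_def by simp
  have xS: "x \<in> S" using assms(7) S_def by simp
  have Sfin: "\<And>y. y \<in> S \<Longrightarrow> finite y \<and> y \<subseteq> L \<and> card y \<le> n" unfolding S_def expn_def by auto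
  have Utop: "U \<subseteq> topspace T" using assms(8) openin_subset by auto
  have Ucl: "U \<subseteq> T closure_of U" using closure_of_subset[OF Utop] .
  have xcl: "x \<in> T closure_of U" using Ucl assms(9) by auto
  have upopen: "\<And>e. e \<in> S \<Longrightarrow> openin T (upset S e)"
    using upset_open[OF assms(6) assms(4) hS] Sfin by blast
  have upclosed: "\<And>e. e \<in> S \<Longrightarrow> closedin T (upset S e)"
    using upset_closed[OF assms(6) assms(4) hS] by blast
  define A where "A = upset S x - T closure_of U"
  have Aopen: "openin T A" unfolding A_def using upopen[OF xS] by (intro openin_diff) auto
  show ?thesis
  proof (cases "card x < n")
    case False
    have "upset S x = {x}"
    proof -
      have "f = x" if "f \<in> S" "x \<subseteq> f" for f
      proof -
        have fx: "finite f" "card f \<le> n" "finite x" using Sfin[OF that(1)] Sfin[OF xS] by auto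
        have "card x \<le> card f" using card_mono[OF fx(1) that(2)] .
        hence "card x = card f" using fx False by linarith
        thus ?thesis using card_subset_eq[OF fx(1) that(2)] by simp
      qed
      thus ?thesis using xS unfolding upset_def by auto
    qed
    thus ?thesis using xcl unfolding S_def by (intro exI[of _ "{}"]) auto
  next
    case True
    show ?thesis
    proof (rule ccontr)
      assume neg: "\<not> ?thesis"
      have negF: "\<And>F. finite F \<Longrightarrow> F \<subseteq> upset S x - {x} \<Longrightarrow> \<not> A \<subseteq> (\<Union>y\<in>F. upset S y)"
        using neg unfolding S_def A_def by blast
      define good where "good y \<longleftrightarrow> y \<in> upset S x \<and> y \<notin> T closure_of U \<and> \<not> y \<subseteq> x \<and> openin T {y}" for y
      have goodS: "\<And>y. good y \<Longrightarrow> y \<in> S" unfolding good_def upset_def by auto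
      have key: "\<exists>y. good y \<and> y \<inter> K \<subseteq> x" if Kf: "finite K" for K
      proof -
        define F where "F = (\<lambda>a. insert a x) ` (K \<inter> L - x)"
        have Ffin: "finite F" unfolding F_def using Kf by auto
        have FS: "F \<subseteq> upset S x - {x}"
        proof
          fix f assume "f \<in> F"
          then obtain a where a: "a \<in> K" "a \<in> L" "a \<notin> x" "f = insert a x" unfolding F_def by auto
          have "card f = Suc (card x)" using a Sfin[OF xS] by auto
          hence "f \<in> S" using a Sfin[OF xS] True unfolding S_def expn_def by auto
          thus "f \<in> upset S x - {x}" using a unfolding upset_def by auto
        qed
        define R where "R = A - (\<Union>y\<in>F. upset S y)"
        have Rne: "R \<noteq> {}" using negF[OF Ffin FS] unfolding R_def by auto
        have Ropen: "openin T R" unfolding R_def using Aopen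
          by (intro openin_diff closedin_Union) (use Ffin FS upclosed in \<open>auto simp: upset_def\<close>)
        have RS: "R \<subseteq> S" unfolding R_def A_def upset_def by auto
        have "card ` R \<subseteq> {..n}"
        proof
          fix c assume "c \<in> card ` R"
          then obtain w where "w \<in> R" "c = card w" by blast
          thus "c \<in> {..n}" using RS Sfin[of w] by auto
        qed
        hence cfin: "finite (card ` R)" using finite_subset by blast
        obtain y where yR: "y \<in> R" and ycard: "card y = Max (card ` R)"
        proof -
          have "Max (card ` R) \<in> card ` R" using Max_in[OF cfin] Rne by blast
          then obtain y where "y \<in> R" "card y = Max (card ` R)" by (metis imageE)
          thus thesis using that by blast
        qed
        have ymax: "\<And>w. w \<in> R \<Longrightarrow> card w \<le> card y" using ycard cfin by simp
        have yS: "y \<in> S" using yR RS by auto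
        have single: "{y} = upset S y \<inter> R"
        proof
          show "upset S y \<inter> R \<subseteq> {y}"
          proof
            fix w assume w: "w \<in> upset S y \<inter> R"
            hence "y \<subseteq> w" "w \<in> S" unfolding upset_def by auto
            moreover have "finite w" using \<open>w \<in> S\<close> Sfin by blast
            moreover have "card y \<le> card w" using card_mono calculation by blast
            moreover have "card w \<le> card y" using ymax w by blast
            ultimately show "w \<in> {y}" using card_subset_eq[of w y] by simp
          qed
        qed (use yR yS in \<open>auto simp: upset_def\<close>)
        have yo: "openin T {y}" unfolding single using upopen[OF yS] Ropen by auto
        have yA: "y \<in> upset S x" "y \<notin> T closure_of U" using yR unfolding R_def A_def by auto
        have ynx: "\<not> y \<subseteq> x"
        proof
          assume "y \<subseteq> x" hence "y = x" using yA unfolding upset_def by auto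
          thus False using yA xcl by auto
        qed
        have yK: "y \<inter> K \<subseteq> x"
        proof
          fix a assume a: "a \<in> y \<inter> K"
          show "a \<in> x"
          proof (rule ccontr)
            assume ax: "a \<notin> x"
            have aL: "a \<in> L" using a Sfin[OF yS] by auto
            have fF: "insert a x \<in> F" unfolding F_def using a aL ax by auto
            have "y \<in> upset S (insert a x)" using a yA yS unfolding upset_def by auto
            thus False using yR fF unfolding R_def by auto
          qed
        qed
        show ?thesis using yA ynx yo yK unfolding good_def by auto
      qed
      define h where "h Z = (SOME y. good y \<and> y \<inter> \<Union>Z \<subseteq> x)" for Z
      define Sq where "Sq = rec_nat {} (\<lambda>_ Z. insert (h Z) Z)"
      have Sq0: "Sq 0 = {}" and SqS: "\<And>j. Sq (Suc j) = insert (h (Sq j)) (Sq j)"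
        unfolding Sq_def by simp_all
      have inv: "finite (Sq j) \<and> card (Sq j) = j \<and> (\<forall>y\<in>Sq j. good y) \<and>
                 (\<forall>u\<in>Sq j. \<forall>v\<in>Sq j. u \<noteq> v \<longrightarrow> u \<inter> v \<subseteq> x)" for j
      proof (induction j)
        case 0 thus ?case using Sq0 by simp
      next
        case (Suc j)
        define Z where "Z = Sq j"
        have Zf: "finite Z" "\<And>y. y \<in> Z \<Longrightarrow> good y" using Suc.IH unfolding Z_def by blast+
        have "\<And>y. y \<in> Z \<Longrightarrow> finite y" using Zf(2) goodS Sfin by blast
        hence "finite (\<Union>Z)" using Zf(1) by (intro finite_Union)
        hence "\<exists>y. good y \<and> y \<inter> \<Union>Z \<subseteq> x" by (rule key)
        then obtain y0 where "good y0 \<and> y0 \<inter> \<Union>Z \<subseteq> x" by (elim exE)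
        hence hZ: "good (h Z) \<and> h Z \<inter> \<Union>Z \<subseteq> x" unfolding h_def by (rule someI)
        have notin: "h Z \<notin> Z"
        proof
          assume "h Z \<in> Z" hence "h Z \<subseteq> x" using hZ by auto
          thus False using hZ unfolding good_def by auto
        qed
        have "\<forall>u\<in>Z. u \<inter> h Z \<subseteq> x \<and> h Z \<inter> u \<subseteq> x" using hZ by blast
        thus ?case using Suc notin hZ unfolding SqS Z_def[symmetric] by auto
      qed
      have mono: "i \<le> j \<Longrightarrow> Sq i \<subseteq> Sq j" for i j
        by (rule lift_Suc_mono_le[of Sq]) (auto simp: SqS)
      define Y where "Y = (\<Union>j. Sq j)"
      have Ygood: "\<And>y. y \<in> Y \<Longrightarrow> good y" using inv unfolding Y_def by blast
      have YS: "Y \<subseteq> S" using Ygood goodS by auto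
      have Ypw: "\<And>u v. u \<in> Y \<Longrightarrow> v \<in> Y \<Longrightarrow> u \<noteq> v \<Longrightarrow> u \<inter> v \<subseteq> x"
      proof -
        fix u v assume "u \<in> Y" "v \<in> Y" "u \<noteq> v"
        then obtain i j where "u \<in> Sq i" "v \<in> Sq j" unfolding Y_def by auto
        hence "u \<in> Sq (max i j)" "v \<in> Sq (max i j)" using mono[of i "max i j"] mono[of j "max i j"] by auto
        thus "u \<inter> v \<subseteq> x" using inv \<open>u \<noteq> v\<close> by blast
      qed
      have Yinf: "infinite Y"
      proof
        assume fY: "finite Y"
        have "Sq (Suc (card Y)) \<subseteq> Y" unfolding Y_def by auto
        hence "card (Sq (Suc (card Y))) \<le> card Y" using fY card_mono by blast
        thus False using inv by simp
      qed
      have LF: "\<exists>N. openin T N \<and> z \<in> N \<and> finite (N \<inter> Y)" if zS: "z \<in> S" for z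
      proof (cases "x \<subseteq> z")
        case False
        have "openin T (topspace T - upset S x)" using upclosed[OF xS] by auto
        moreover have "Y \<subseteq> upset S x" using Ygood unfolding good_def by auto
        moreover have "(topspace T - upset S x) \<inter> Y = {}" using calculation(2) by blast
        moreover have "z \<in> topspace T - upset S x" using zS False hS unfolding upset_def by auto
        ultimately show ?thesis by (metis finite.emptyI)
      next
        case xz: True
        show ?thesis
        proof (cases "z = x")
          case True
          have "U \<inter> Y = {}" using Ucl Ygood unfolding good_def by auto
          thus ?thesis using True assms(8,9) by (intro exI[of _ U]) auto
        next
          case False
          then obtain a where a: "a \<in> z" "a \<notin> x" using xz by auto
          have sub: "upset S z \<inter> Y \<subseteq> {y \<in> Y. a \<in> y}" using a unfolding upset_def by auto
          have "finite {y \<in> Y. a \<in> y}"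
          proof (cases "{y \<in> Y. a \<in> y} = {}")
            case False
            then obtain y0 where y0: "y0 \<in> Y" "a \<in> y0" by auto
            have "{y \<in> Y. a \<in> y} \<subseteq> {y0}" using Ypw y0 a by blast
            thus ?thesis using finite_subset by blast
          next
            case True thus ?thesis by (metis finite.emptyI)
          qed
          hence "finite (upset S z \<inter> Y)" using sub finite_subset by blast
          moreover have "z \<in> upset S z" using zS unfolding upset_def by auto
          ultimately show ?thesis using upopen[OF zS] by blast
        qed
      qed
      have Yopen: "openin T (S - Y)"
      proof (subst openin_subopen, intro ballI)
        fix z assume z: "z \<in> S - Y"
        then obtain N where N: "openin T N" "z \<in> N" "finite (N \<inter> Y)" using LF by blast
        have "closedin T (N \<inter> Y)" using N(3) YS hS assms(6) t1_space_closedin_finite by blast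
        hence "openin T (N - N \<inter> Y)" using N(1) by blast
        moreover have "N - N \<inter> Y \<subseteq> S - Y" using N(1) openin_subset hS by auto
        ultimately show "\<exists>T'. openin T T' \<and> z \<in> T' \<and> T' \<subseteq> S - Y" using N z by blast
      qed
      define C where "C = (\<lambda>y. {y}) ` Y \<union> {S - Y}"
      have Copen: "\<forall>W\<in>C. openin T W" unfolding C_def using Ygood Yopen unfolding good_def by auto
      have Cun: "\<Union>C = topspace T" unfolding C_def using YS hS by auto
      have Clf: "locally_finite_family T C"
        unfolding locally_finite_family_def
      proof
        fix z assume "z \<in> topspace T"
        then obtain N where N: "openin T N" "z \<in> N" "finite (N \<inter> Y)" using LF hS by blast
        have "{W \<in> C. W \<inter> N \<noteq> {}} \<subseteq> (\<lambda>y. {y}) ` (N \<inter> Y) \<union> {S - Y}" unfolding C_def by auto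
        hence "finite {W \<in> C. W \<inter> N \<noteq> {}}" using N(3) finite_subset by blast
        thus "\<exists>V. openin T V \<and> z \<in> V \<and> finite {U \<in> C. U \<inter> V \<noteq> {}}" using N by blast
      qed
      have "finite C" using assms(5) Copen Cun Clf unfolding feebly_compact_def by blast
      hence "finite ((\<lambda>y. {y}) ` Y)" unfolding C_def by auto
      hence "finite Y" using finite_imageD inj_on_def by (metis (no_types, lifting) singleton_inject)
      thus False using Yinf by simp
    qed
  qed
qed

end
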